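(* For any integer $d\ge5$ with $d\equiv1\pmod4$ and any $\beta^*\ge d\ln d$, there exists an RBM of width $\beta^*$ with $d$ observed variables and one latent variable such that the width $\gamma$ of the MRF of the observed variables satisfies \[\gamma\ge\beta^*\cdot\frac{2^{(d-1)/2}}{4d^{3/2}}.\]
   Context: RBM: $\mathbb{P}(X=x,Y=y)\propto\exp(x^TJy+h^Tx+g^Ty)$ over observed $X\in\{-1,1\}^n$ and latent $Y\in\{-1,1\}^m$, $J\in\mathbb{R}^{n\times m}$, $h\in\mathbb{R}^n$, $g\in\mathbb{R}^m$. Its width is $\beta^*:=\max\big(\max_{i}\sum_{j}|J_{i,j}|+|h_i|,\ \max_{j}\sum_{i}|J_{i,j}|+|g_j|\big)$. The marginal of $X$ is $\propto\exp(f(x))$, $f(x)=\sum_j\rho(J_j\cdot x+g_j)+h^Tx$, $\rho(t)=\log(e^t+e^{-t})$, $J_j$ the $j$-th column of $J$; writing $f=\sum_{T\subseteq[n]}\hat f(T)\prod_{i\in T}x_i$, the MRF width is $\gamma:=\max_{u\in[n]}\sum_{T\ni u}|\hat f(T)|$. *)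

theory Defs
  imports Complex_Main "HOL-Library.FuncSet"
begin

text \<open>Observed configurations x in {-1,1}^n, indexed by {0..<n}; latent index set {0..<m}.
  An RBM is given by J (n x m), h (length n), g (length m), as functions on naturals.\<close>

definition hcube :: "nat \<Rightarrow> (nat \<Rightarrow> real) set" where
  "hcube n = {0..<n} \<rightarrow>\<^sub>E {-1, 1}"

definition rho :: "real \<Rightarrow> real" where
  "rho t = ln (exp t + exp (- t))"

definition rbm_width ::
  "nat \<Rightarrow> nat \<Rightarrow> (nat \<Rightarrow> nat \<Rightarrow> real) \<Rightarrow> (nat \<Rightarrow> real) \<Rightarrow> (nat \<Rightarrow> real) \<Rightarrow> real" where
  "rbm_width n m J h g =
     max (Max ((\<lambda>i. (\<Sum>j<m. \<bar>J i j\<bar>) + \<bar>h i\<bar>) ` {..<n}))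
         (Max ((\<lambda>j. (\<Sum>i<n. \<bar>J i j\<bar>) + \<bar>g j\<bar>) ` {..<m}))"

text \<open>The function f with P(X = x) proportional to exp (f x).\<close>
definition rbm_marginal ::
  "nat \<Rightarrow> nat \<Rightarrow> (nat \<Rightarrow> nat \<Rightarrow> real) \<Rightarrow> (nat \<Rightarrow> real) \<Rightarrow> (nat \<Rightarrow> real) \<Rightarrow> (nat \<Rightarrow> real) \<Rightarrow> real" where
  "rbm_marginal n m J h g x =
     (\<Sum>j<m. rho ((\<Sum>i<n. J i j * x i) + g j)) + (\<Sum>i<n. h i * x i)"

definition fourier_coeff :: "nat \<Rightarrow> ((nat \<Rightarrow> real) \<Rightarrow> real) \<Rightarrow> nat set \<Rightarrow> real" where
  "fourier_coeff n f T = (\<Sum>x\<in>hcube n. f x * (\<Prod>i\<in>T. x i)) / 2 ^ n"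

definition mrf_width :: "nat \<Rightarrow> ((nat \<Rightarrow> real) \<Rightarrow> real) \<Rightarrow> real" where
  "mrf_width n f =
     Max ((\<lambda>u. \<Sum>T\<in>{T. T \<subseteq> {0..<n} \<and> u \<in> T}. \<bar>fourier_coeff n f T\<bar>) ` {0..<n})"

end

theory Submission
  imports Defs
begin

lemma hcube_Suc_eq: "hcube (Suc m) = (\<lambda>(b, g). g(m := b)) ` ({-1,1} \<times> hcube m)"
proof -
  have "{0..<Suc m} = insert m {0..<m}" by auto
  then show ?thesis unfolding hcube_def by (simp add: PiE_insert_eq)
qed

lemma hcube_inj: "inj_on (\<lambda>(b, g). g(m := b)) ({-1,1} \<times> hcube m)"
proof (rule inj_onI, clarify)
  fix b1 g1 b2 g2 assume h: "b1 \<in> {-1,1::real}" "g1 \<in> hcube m" "b2 \<in> {-1,1::real}" "g2 \<in> hcube m"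
     "g1(m := b1) = g2(m := b2)"
  have "g1 m = undefined" "g2 m = undefined" using h(2,4) unfolding hcube_def by (auto simp: PiE_def extensional_def)
  then show "b1 = b2 \<and> g1 = g2" using h(5)
    by (metis fun_upd_eqD fun_upd_same fun_upd_triv fun_upd_upd)
qed

lemma finite_hcube: "finite (hcube m)"
  unfolding hcube_def by (intro finite_PiE) auto

lemma hcube_Suc_sum:
  fixes F :: "(nat \<Rightarrow> real) \<Rightarrow> 'a::comm_monoid_add"
  shows "(\<Sum>x\<in>hcube (Suc m). F x) = (\<Sum>y\<in>hcube m. F (y(m:=1)) + F (y(m:=-1)))"
proof -
  have "(\<Sum>x\<in>hcube (Suc m). F x) = (\<Sum>p\<in>{-1,1} \<times> hcube m. F ((\<lambda>(b, g). g(m := b)) p))"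
    unfolding hcube_Suc_eq by (rule sum.reindex[OF hcube_inj, unfolded comp_def])
  also have "\<dots> = (\<Sum>b\<in>{-1,1}. \<Sum>y\<in>hcube m. F (y(m:=b)))"
    by (subst sum.cartesian_product) (simp add: case_prod_beta)
  also have "\<dots> = (\<Sum>y\<in>hcube m. F (y(m:=-1))) + (\<Sum>y\<in>hcube m. F (y(m:=1)))" by simp
  also have "\<dots> = (\<Sum>y\<in>hcube m. F (y(m:=1)) + F (y(m:=-1)))"
    by (simp add: sum.distrib add.commute)
  finally show ?thesis .
qed

definition B :: "nat \<Rightarrow> (real \<Rightarrow> complex) \<Rightarrow> complex" where
  "B m H = (\<Sum>p\<le>m. of_nat (m choose p) * (1 + \<i>) ^ p * (1 - \<i>) ^ (m - p) * H (2 * real p - real m))"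

lemma B_rec: "B (Suc m) H = (1 + \<i>) * B m (\<lambda>s. H (s + 1)) + (1 - \<i>) * B m (\<lambda>s. H (s - 1))"
proof -
  define g where "g p = of_nat (m choose p) * (1 + \<i>) ^ p * (1 - \<i>) ^ (Suc m - p) * H (2 * real p - real (Suc m))" for p
  have L: "B (Suc m) H = g 0 + (\<Sum>p\<le>m. of_nat (m choose p) * (1 + \<i>) ^ Suc p * (1 - \<i>) ^ (m - p) * H (2 * real p - real m + 1))
     + (\<Sum>p\<le>m. g (Suc p))"
    unfolding B_def g_def
    by (subst sum.atMost_Suc_shift) (simp add: sum.distrib algebra_simps)
  have R1: "(1 + \<i>) * B m (\<lambda>s. H (s + 1)) = (\<Sum>p\<le>m. of_nat (m choose p) * (1 + \<i>) ^ Suc p * (1 - \<i>) ^ (m - p) * H (2 * real p - real m + 1))"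
    unfolding B_def sum_distrib_left by (rule sum.cong) (auto simp: algebra_simps)
  have "g 0 + (\<Sum>p\<le>m. g (Suc p)) = (\<Sum>p\<le>Suc m. g p)"
    by (subst sum.atMost_Suc_shift) simp
  also have "\<dots> = (\<Sum>p\<le>m. g p)" by (simp add: g_def)
  also have "\<dots> = (1 - \<i>) * B m (\<lambda>s. H (s - 1))"
    unfolding B_def sum_distrib_left g_def
  proof (rule sum.cong[OF refl])
    fix p assume "p \<in> {..m}" then have "Suc m - p = Suc (m - p)" by simp
    then show "of_nat (m choose p) * (1 + \<i>) ^ p * (1 - \<i>) ^ (Suc m - p) * H (2 * real p - real (Suc m)) =
      (1 - \<i>) * (of_nat (m choose p) * (1 + \<i>) ^ p * (1 - \<i>) ^ (m - p) * H (2 * real p - real m - 1))"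
      by (simp add: algebra_simps)
  qed
  finally show ?thesis using L R1 by (simp add: algebra_simps)
qed

lemma upd_sum: fixes m :: nat shows "(\<Sum>j<m. (y(m:=b)) j) = (\<Sum>j<m. y j)"
  by (intro sum.cong) auto
lemma upd_prod: fixes m :: nat shows "(\<Prod>j<m. F ((y(m:=b)) j)) = (\<Prod>j<m. F (y j))"
  by (intro prod.cong) auto

lemma cube_B:
  "(\<Sum>y\<in>hcube m. H (\<Sum>j<m. y j) * (\<Prod>j<m. 1 + \<i> * complex_of_real (y j))) = B m H"
proof (induction m arbitrary: H)
  case 0
  have "hcube 0 = {\<lambda>_. undefined}" unfolding hcube_def by simp
  then show ?case by (simp add: B_def)
next
  case (Suc m)
  have "(\<Sum>y\<in>hcube (Suc m). H (\<Sum>j<Suc m. y j) * (\<Prod>j<Suc m. 1 + \<i> * complex_of_real (y j)))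
    = (\<Sum>y\<in>hcube m. (1 + \<i>) * (H ((\<Sum>j<m. y j) + 1) * (\<Prod>j<m. 1 + \<i> * complex_of_real (y j)))
        + (1 - \<i>) * (H ((\<Sum>j<m. y j) - 1) * (\<Prod>j<m. 1 + \<i> * complex_of_real (y j))))"
    unfolding hcube_Suc_sum by (simp add: upd_sum upd_prod algebra_simps)
  also have "\<dots> = (1 + \<i>) * B m (\<lambda>s. H (s + 1)) + (1 - \<i>) * B m (\<lambda>s. H (s - 1))"
    using Suc.IH[of "\<lambda>s. H (s + 1)"] Suc.IH[of "\<lambda>s. H (s - 1)"]
    by (simp add: sum.distrib sum_distrib_left[symmetric])
  also have "\<dots> = B (Suc m) H" by (rule B_rec[symmetric])
  finally show ?case .
qed

lemma B_add: "B m (\<lambda>s. H1 s + H2 s) = B m H1 + B m H2"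
  unfolding B_def by (simp add: sum.distrib algebra_simps)
lemma B_diff: "B m (\<lambda>s. H1 s - H2 s) = B m H1 - B m H2"
  unfolding B_def by (simp add: sum_subtractf algebra_simps)
lemma B_scale: "B m (\<lambda>s. c * H s) = c * B m H"
  unfolding B_def by (simp add: sum_distrib_left algebra_simps)
lemma B_cong: "(\<And>p. p \<le> m \<Longrightarrow> H1 (2 * real p - real m) = H2 (2 * real p - real m)) \<Longrightarrow> B m H1 = B m H2"
  unfolding B_def by (intro sum.cong) auto

definition sg :: "real \<Rightarrow> complex" where "sg s = complex_of_real (sgn s)"

lemma sg_shift:
  fixes p n :: nat
  shows "sg (2 * real p - real (2 * n) + 1 + 1) - sg (2 * real p - real (2 * n) - 1 - 1) =
    (if p = n then 2 else 0) + (if Suc p = n then 1 else 0) + (if p = Suc n then 1 else 0)"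
proof -
  have "sgn (2 * real p - real (2 * n) + 1 + 1) - sgn (2 * real p - real (2 * n) - 1 - 1) =
    (if p = n then 2 else 0) + (if Suc p = n then 1 else 0) + (if p = Suc n then (1::real) else 0)"
  proof (cases "p + 2 \<le> n")
    case True then show ?thesis by (simp add: sgn_if)
  next
    case False
    then consider "Suc p = n" | "p = n" | "p = Suc n" | "p \<ge> n + 2" by linarith
    then show ?thesis by cases (simp_all add: sgn_if)
  qed
  then have "complex_of_real (sgn (2 * real p - real (2 * n) + 1 + 1) - sgn (2 * real p - real (2 * n) - 1 - 1)) =
    complex_of_real ((if p = n then 2 else 0) + (if Suc p = n then 1 else 0) + (if p = Suc n then (1::real) else 0))"
    by simp
  then show ?thesis unfolding sg_def of_real_diff by (simp split: if_split_asm)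
qed

fun R :: "nat \<Rightarrow> real" where
  "R 0 = 0"
| "R (Suc n) = 4 * R n + 2 ^ (n + 2) * real (2 * n choose n)"

lemma V_rec: "B (Suc (Suc (2 * n))) sg = 4 * B (2 * n) sg + 4 * \<i> * 2 ^ n * of_nat (2 * n choose n)"
proof -
  let ?a = "1 + \<i>" and ?b = "1 - \<i>"
  have e1: "B (Suc (Suc (2 * n))) sg = 2 * \<i> * B (2 * n) (\<lambda>s. sg (s + 1 + 1)) + 4 * B (2 * n) sg
       - 2 * \<i> * B (2 * n) (\<lambda>s. sg (s - 1 - 1))"
  proof -
    have h: "B (Suc (Suc (2 * n))) sg = ?a * (?a * B (2 * n) (\<lambda>s. sg (s + 1 + 1)) + ?b * B (2 * n) (\<lambda>s. sg (s - 1 + 1)))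
       + ?b * (?a * B (2 * n) (\<lambda>s. sg (s + 1 - 1)) + ?b * B (2 * n) (\<lambda>s. sg (s - 1 - 1)))"
      by (simp only: B_rec)
    have "(\<lambda>s. sg (s + 1 - 1)) = sg" "(\<lambda>s. sg (s - 1 + 1)) = sg" by simp_all
    with h show ?thesis by (simp add: algebra_simps)
  qed
  have e2: "B (2 * n) (\<lambda>s. sg (s + 1 + 1)) - B (2 * n) (\<lambda>s. sg (s - 1 - 1)) =
     B (2 * n) (\<lambda>s. sg (s + 1 + 1) - sg (s - 1 - 1))" by (rule B_diff[symmetric])
  have e3: "B (2 * n) (\<lambda>s. sg (s + 1 + 1) - sg (s - 1 - 1)) =
    (\<Sum>p\<le>2*n. of_nat (2 * n choose p) * ?a ^ p * ?b ^ (2 * n - p) *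
      ((if p = n then 2 else 0) + (if Suc p = n then 1 else 0) + (if p = Suc n then 1 else 0)))"
    unfolding B_def by (rule sum.cong[OF refl]) (simp only: sg_shift)
  have e4: "\<dots> = 2 * (of_nat (2 * n choose n) * ?a ^ n * ?b ^ n)"
  proof (cases n)
    case 0 then show ?thesis by simp
  next
    case (Suc k)
    define f where "f p = of_nat (2 * n choose p) * ?a ^ p * ?b ^ (2 * n - p)" for p
    have S: "(\<Sum>p\<le>2*n. f p * ((if p = n then 2 else 0) + (if Suc p = n then 1 else 0) + (if p = Suc n then 1 else 0)))
      = (\<Sum>p\<le>2*n. (if p = n then 2 * f p else 0)) + (\<Sum>p\<le>2*n. (if p = k then f p else 0))
        + (\<Sum>p\<le>2*n. (if p = Suc n then f p else 0))"
      unfolding sum.distrib[symmetric] by (rule sum.cong) (auto simp: Suc)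
    also have "\<dots> = 2 * f n + f k + f (Suc n)"
    proof -
      have mem: "n \<in> {..2*n}" "k \<in> {..2*n}" "Suc n \<in> {..2*n}" using Suc by auto
      show ?thesis by (simp only: sum.delta[OF finite_atMost] mem if_True)
    qed
    finally have S2: "(\<Sum>p\<le>2*n. f p * ((if p = n then 2 else 0) + (if Suc p = n then 1 else 0) + (if p = Suc n then 1 else 0)))
       = 2 * f n + f k + f (Suc n)" .
    have Z: "f k + f (Suc n) = 0"
    proof -
      have c: "(2 * n choose k) = (2 * n choose Suc n)"
        using binomial_symmetric[of k "2 * n"] Suc by simp
      have x: "2*n - k = Suc (Suc k)" "2*n - Suc (Suc k) = k" "Suc n = Suc (Suc k)" using Suc by auto
      have "f k + f (Suc n) = of_nat (2 * n choose k) * (?a ^ k * ?b ^ k) * (?b * ?b + ?a * ?a)"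
        unfolding f_def c x by (simp add: power_Suc algebra_simps)
      also have "?b * ?b + ?a * ?a = 0" by (simp add: algebra_simps)
      finally show ?thesis by simp
    qed
    have fn: "f n = of_nat (2 * n choose n) * ?a ^ n * ?b ^ n" unfolding f_def by simp
    show ?thesis using S2 Z fn unfolding f_def[symmetric] by (simp add: algebra_simps)
  qed
  have ab: "?a ^ n * ?b ^ n = 2 ^ n"
  proof -
    have "?a * ?b = 2" by (simp add: algebra_simps)
    then show ?thesis by (metis power_mult_distrib)
  qed
  have d: "B (2 * n) (\<lambda>s. sg (s + 1 + 1)) - B (2 * n) (\<lambda>s. sg (s - 1 - 1)) = 2 * of_nat (2 * n choose n) * 2 ^ n"
    using e2 e3 e4 ab by (simp add: mult.assoc)
  have "B (Suc (Suc (2 * n))) sg = 4 * B (2 * n) sg + 2 * \<i> * (B (2 * n) (\<lambda>s. sg (s + 1 + 1)) - B (2 * n) (\<lambda>s. sg (s - 1 - 1)))"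
    using e1 by (simp add: algebra_simps)
  then show ?thesis unfolding d by (simp add: algebra_simps)
qed

lemma V_R: "B (2 * n) sg = \<i> * complex_of_real (R n)"
proof (induction n)
  case 0 then show ?case by (simp add: B_def sg_def)
next
  case (Suc n)
  have "B (2 * Suc n) sg = B (Suc (Suc (2 * n))) sg" by simp
  also have "\<dots> = 4 * B (2 * n) sg + 4 * \<i> * 2 ^ n * of_nat (2 * n choose n)" by (rule V_rec)
  also have "\<dots> = \<i> * complex_of_real (R (Suc n))" unfolding Suc by (simp add: algebra_simps)
  finally show ?case .
qed

lemma R_nonneg: "R n \<ge> 0"
  by (induction n) auto

lemma R_Suc_ge: "R (Suc n) \<ge> 2 ^ (n + 2) * real (2 * n choose n)"
  using R_nonneg[of n] by simp

lemma central_rec: "(2 * Suc k choose Suc k) * Suc k = 2 * (2 * k + 1) * (2 * k choose k)"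
proof -
  have a: "Suc (2*k+1) * (2*k+1 choose k) = (Suc (2*k+1) choose Suc k) * Suc k"
    by (rule Suc_times_binomial_eq)
  have b: "Suc (2*k) * (2*k choose k) = (Suc (2*k) choose Suc k) * Suc k"
    by (rule Suc_times_binomial_eq)
  have c: "(Suc (2*k) choose Suc k) = (2*k+1 choose k)"
    using binomial_symmetric[of k "2*k+1"] by simp
  have e: "2 * Suc k = Suc (2*k+1)" by simp
  have "(2 * Suc k choose Suc k) * Suc k = 2 * (Suc k * (2*k+1 choose k))"
    unfolding e using a by simp
  also have "Suc k * (2*k+1 choose k) = (2 * k + 1) * (2 * k choose k)"
    using b c by simp
  finally show ?thesis by simp
qed

lemma central_binom: "real (2 * k choose k) ^ 2 * (4 * real k + 1) \<ge> 16 ^ k"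
proof (induction k)
  case 0 then show ?case by simp
next
  case (Suc k)
  define c where "c = real (2 * k choose k)"
  define c' where "c' = real (2 * Suc k choose Suc k)"
  have rec: "c' * (real k + 1) = 2 * (2 * real k + 1) * c"
  proof -
    have h: "real (2 * Suc k choose Suc k) * real (Suc k) = real (2 * (2 * k + 1)) * real (2 * k choose k)"
      by (metis central_rec of_nat_mult)
    then show ?thesis unfolding c_def[symmetric] c'_def[symmetric] by (simp add: algebra_simps)
  qed
  have IH: "c ^ 2 * (4 * real k + 1) \<ge> 16 ^ k" using Suc unfolding c_def .
  have poly: "(2 * real k + 1) ^ 2 * (4 * real k + 5) \<ge> 4 * (real k + 1) ^ 2 * (4 * real k + 1)"
    by (simp add: power2_eq_square algebra_simps)
  have E: "(real k + 1) ^ 2 * (c' ^ 2 * (4 * real (Suc k) + 1)) = 4 * ((2 * real k + 1) ^ 2 * (4 * real k + 5)) * c ^ 2"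
  proof -
    have "(real k + 1) ^ 2 * (c' ^ 2 * (4 * real (Suc k) + 1)) = (c' * (real k + 1)) ^ 2 * (4 * real k + 5)"
      by (simp add: power_mult_distrib)
    also have "\<dots> = (2 * (2 * real k + 1) * c) ^ 2 * (4 * real k + 5)" unfolding rec ..
    also have "\<dots> = 4 * ((2 * real k + 1) ^ 2 * (4 * real k + 5)) * c ^ 2"
      by (simp add: power2_eq_square algebra_simps)
    finally show ?thesis .
  qed
  have "(real k + 1) ^ 2 * 16 ^ Suc k = 16 * (real k + 1) ^ 2 * 16 ^ k" by simp
  also have "\<dots> \<le> 16 * (real k + 1) ^ 2 * (c ^ 2 * (4 * real k + 1))"
    using IH by (intro mult_left_mono) auto
  also have "\<dots> = 4 * (4 * (real k + 1) ^ 2 * (4 * real k + 1)) * c ^ 2"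
    by (simp add: algebra_simps)
  also have "\<dots> \<le> 4 * ((2 * real k + 1) ^ 2 * (4 * real k + 5)) * c ^ 2"
    using poly by (intro mult_right_mono mult_left_mono) auto
  also have "\<dots> = (real k + 1) ^ 2 * (c' ^ 2 * (4 * real (Suc k) + 1))" using E by simp
  finally have "(real k + 1) ^ 2 * 16 ^ Suc k \<le> (real k + 1) ^ 2 * (c' ^ 2 * (4 * real (Suc k) + 1))" .
  then have "16 ^ Suc k \<le> c' ^ 2 * (4 * real (Suc k) + 1)"
    by (rule mult_left_le_imp_le) auto
  then show ?case unfolding c'_def .
qed


lemma rho_abs: "rho t = \<bar>t\<bar> + ln (1 + exp (- 2 * \<bar>t\<bar>))"
proof -
  have "exp t + exp (- t) = exp \<bar>t\<bar> * (1 + exp (- 2 * \<bar>t\<bar>))"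
    by (cases "t \<ge> 0") (simp_all add: algebra_simps flip: exp_add)
  moreover have p: "0 < 1 + exp (- 2 * \<bar>t\<bar>)" by (simp add: add_pos_pos)
  ultimately show ?thesis unfolding rho_def by (simp add: ln_mult)
qed

lemma rho_even: "rho (- t) = rho t"
  unfolding rho_def by (simp add: add.commute)

lemma ln1_bound: fixes x :: real shows "0 \<le> x \<Longrightarrow> 0 \<le> ln (1 + x) \<and> ln (1 + x) \<le> x"
  using ln_add_one_self_le_self[of x] by simp

lemma rho_diff_pos:
  assumes "0 \<le> w" "w \<le> t1" "w \<le> t2"
  shows "\<bar>rho t1 - rho t2 - (t1 - t2)\<bar> \<le> exp (- 2 * w)"
proof -
  have t: "\<bar>t1\<bar> = t1" "\<bar>t2\<bar> = t2" using assms by auto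
  have e1: "exp (- 2 * t1) \<le> exp (- 2 * w)" "exp (- 2 * t2) \<le> exp (- 2 * w)" using assms by auto
  have l1: "0 \<le> ln (1 + exp (- 2 * t1)) \<and> ln (1 + exp (- 2 * t1)) \<le> exp (- 2 * t1)" by (rule ln1_bound) simp
  have l2: "0 \<le> ln (1 + exp (- 2 * t2)) \<and> ln (1 + exp (- 2 * t2)) \<le> exp (- 2 * t2)" by (rule ln1_bound) simp
  show ?thesis unfolding rho_abs[of t1] rho_abs[of t2] t using e1 l1 l2 by linarith
qed

lemma D_err:
  fixes k :: int
  assumes w: "0 \<le> w"
  shows "\<bar>rho (w * (2 * of_int k + 1)) - rho (w * (2 * of_int k - 1)) - 2 * w * sgn (real_of_int k)\<bar> \<le> exp (- 2 * w)"
proof -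
  consider "k = 0" | "k \<ge> 1" | "k \<le> -1" by linarith
  then show ?thesis
  proof cases
    case 1
    then show ?thesis using rho_even[of w] by simp
  next
    case 2
    then have k: "real_of_int k \<ge> 1" by simp
    have "w \<le> w * (2 * of_int k - 1)" "w \<le> w * (2 * of_int k + 1)"
      using w k mult_left_mono[of 1 "2 * of_int k - 1" w] mult_left_mono[of 1 "2 * of_int k + 1" w] by auto
    then have "\<bar>rho (w * (2 * of_int k + 1)) - rho (w * (2 * of_int k - 1)) - (w * (2 * of_int k + 1) - w * (2 * of_int k - 1))\<bar> \<le> exp (- 2 * w)"
      using w by (intro rho_diff_pos) auto
    then show ?thesis using k by (simp add: algebra_simps)
  next
    case 3
    then have k: "real_of_int (- k) \<ge> 1" by simp
    have "w \<le> w * (2 * of_int (-k) - 1)" "w \<le> w * (2 * of_int (-k) + 1)"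
      using w k mult_left_mono[of 1 "2 * of_int (-k) - 1" w] mult_left_mono[of 1 "2 * of_int (-k) + 1" w] by auto
    then have "\<bar>rho (w * (2 * of_int (-k) - 1)) - rho (w * (2 * of_int (-k) + 1)) - (w * (2 * of_int (-k) - 1) - w * (2 * of_int (-k) + 1))\<bar> \<le> exp (- 2 * w)"
      using w by (intro rho_diff_pos) auto
    moreover have "rho (w * (2 * of_int k + 1)) = rho (w * (2 * of_int (-k) - 1))"
      using rho_even[of "w * (2 * of_int (-k) - 1)"] by (simp add: algebra_simps)
    moreover have "rho (w * (2 * of_int k - 1)) = rho (w * (2 * of_int (-k) + 1))"
      using rho_even[of "w * (2 * of_int (-k) + 1)"] by (simp add: algebra_simps)
    ultimately show ?thesis using k 3 by (simp add: algebra_simps)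
  qed
qed

lemma cmod_ab: "cmod ((1 + \<i>) ^ p * (1 - \<i>) ^ (2 * n - p)) = sqrt 2 ^ (2 * n)" if "p \<le> 2 * n"
proof -
  have "cmod (1 + \<i>) = sqrt 2" "cmod (1 - \<i>) = sqrt 2" by (simp_all add: cmod_def)
  then have "cmod ((1 + \<i>) ^ p * (1 - \<i>) ^ (2 * n - p)) = sqrt 2 ^ (p + (2 * n - p))"
    by (simp add: norm_mult norm_power power_add)
  then show ?thesis using that by simp
qed

lemma B_bound:
  assumes "\<And>p. p \<le> 2 * n \<Longrightarrow> cmod (E (2 * real p - real (2 * n))) \<le> \<epsilon>"
  shows "cmod (B (2 * n) E) \<le> 4 ^ n * 2 ^ n * \<epsilon>"
proof -
  have "cmod (B (2 * n) E) \<le> (\<Sum>p\<le>2*n. cmod (of_nat (2 * n choose p) * (1 + \<i>) ^ p * (1 - \<i>) ^ (2 * n - p) * E (2 * real p - real (2 * n))))"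
    unfolding B_def by (rule norm_sum)
  also have "\<dots> \<le> (\<Sum>p\<le>2*n. real (2 * n choose p) * 2 ^ n * \<epsilon>)"
  proof (rule sum_mono)
    fix p assume "p \<in> {..2*n}" then have p: "p \<le> 2 * n" by simp
    have "cmod (of_nat (2 * n choose p) * (1 + \<i>) ^ p * (1 - \<i>) ^ (2 * n - p) * E (2 * real p - real (2 * n)))
       = real (2 * n choose p) * cmod ((1 + \<i>) ^ p * (1 - \<i>) ^ (2 * n - p)) * cmod (E (2 * real p - real (2 * n)))"
      by (simp add: norm_mult mult.assoc)
    also have "\<dots> = real (2 * n choose p) * 2 ^ n * cmod (E (2 * real p - real (2 * n)))"
      using cmod_ab[OF p] by (simp add: power_mult)
    also have "\<dots> \<le> real (2 * n choose p) * 2 ^ n * \<epsilon>"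
      using assms[OF p] by (intro mult_left_mono) auto
    finally show "cmod (of_nat (2 * n choose p) * (1 + \<i>) ^ p * (1 - \<i>) ^ (2 * n - p) * E (2 * real p - real (2 * n))) \<le> real (2 * n choose p) * 2 ^ n * \<epsilon>" .
  qed
  also have "\<dots> = real (\<Sum>p\<le>2*n. (2 * n choose p)) * 2 ^ n * \<epsilon>"
    by (simp add: sum_distrib_right)
  also have "\<dots> = 4 ^ n * 2 ^ n * \<epsilon>" by (simp add: choose_row_sum power_mult)
  finally show ?thesis .
qed


lemma T_set: "{T. T \<subseteq> {0..<Suc m} \<and> m \<in> T} = insert m ` Pow {..<m}"
proof (intro set_eqI iffI)
  fix T assume "T \<in> {T. T \<subseteq> {0..<Suc m} \<and> m \<in> T}"
  then have "T = insert m (T - {m})" "T - {m} \<in> Pow {..<m}" by auto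
  then show "T \<in> insert m ` Pow {..<m}" by blast
qed auto

lemma insert_inj: "inj_on (insert m) (Pow {..<(m::nat)})"
proof (rule inj_onI)
  fix A B assume "A \<in> Pow {..<m}" "B \<in> Pow {..<m}" "insert m A = insert m B"
  then show "A = B" by (metis Diff_insert_absorb PowD lessThan_iff less_irrefl subsetD)
qed

lemma subset_expand:
  fixes x :: "nat \<Rightarrow> real"
  shows "(\<Sum>T\<in>{T. T \<subseteq> {0..<Suc m} \<and> m \<in> T}. \<i> ^ (card T - 1) * complex_of_real (\<Prod>i\<in>T. x i))
     = complex_of_real (x m) * (\<Prod>j<m. 1 + \<i> * complex_of_real (x j))"
proof -
  have "(\<Sum>T\<in>{T. T \<subseteq> {0..<Suc m} \<and> m \<in> T}. \<i> ^ (card T - 1) * complex_of_real (\<Prod>i\<in>T. x i))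
     = (\<Sum>S\<in>Pow {..<m}. \<i> ^ (card (insert m S) - 1) * complex_of_real (\<Prod>i\<in>insert m S. x i))"
    unfolding T_set by (subst sum.reindex[OF insert_inj]) simp
  also have "\<dots> = (\<Sum>S\<in>Pow {..<m}. complex_of_real (x m) * ((\<Prod>j\<in>S. \<i> * complex_of_real (x j)) * (\<Prod>j\<in>{..<m} - S. 1)))"
  proof (rule sum.cong[OF refl])
    fix S assume "S \<in> Pow {..<m}"
    then have S: "finite S" "m \<notin> S" by (auto intro: finite_subset)
    then show "\<i> ^ (card (insert m S) - 1) * complex_of_real (\<Prod>i\<in>insert m S. x i) =
      complex_of_real (x m) * ((\<Prod>j\<in>S. \<i> * complex_of_real (x j)) * (\<Prod>j\<in>{..<m} - S. 1))"
      by (simp add: prod.distrib)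
  qed
  also have "\<dots> = complex_of_real (x m) * (\<Prod>j<m. \<i> * complex_of_real (x j) + 1)"
    by (simp add: prod_add sum_distrib_left)
  finally show ?thesis by (simp add: add.commute)
qed

lemma fourier_sum:
  "(\<Sum>T\<in>{T. T \<subseteq> {0..<Suc m} \<and> m \<in> T}. \<i> ^ (card T - 1) * complex_of_real (fourier_coeff (Suc m) f T))
   = (\<Sum>x\<in>hcube (Suc m). complex_of_real (f x) * (complex_of_real (x m) * (\<Prod>j<m. 1 + \<i> * complex_of_real (x j)))) / 2 ^ Suc m"
proof -
  have "(\<Sum>T\<in>{T. T \<subseteq> {0..<Suc m} \<and> m \<in> T}. \<i> ^ (card T - 1) * complex_of_real (fourier_coeff (Suc m) f T))
     = (\<Sum>T\<in>{T. T \<subseteq> {0..<Suc m} \<and> m \<in> T}. \<Sum>x\<in>hcube (Suc m). \<i> ^ (card T - 1) * (complex_of_real (f x) * complex_of_real (\<Prod>i\<in>T. x i))) / 2 ^ Suc m"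
    unfolding fourier_coeff_def by (simp add: sum_divide_distrib sum_distrib_left)
  also have "\<dots> = (\<Sum>x\<in>hcube (Suc m). complex_of_real (f x) * (\<Sum>T\<in>{T. T \<subseteq> {0..<Suc m} \<and> m \<in> T}. \<i> ^ (card T - 1) * complex_of_real (\<Prod>i\<in>T. x i))) / 2 ^ Suc m"
    by (subst sum.swap) (simp add: sum_distrib_left algebra_simps)
  also have "\<dots> = (\<Sum>x\<in>hcube (Suc m). complex_of_real (f x) * (complex_of_real (x m) * (\<Prod>j<m. 1 + \<i> * complex_of_real (x j)))) / 2 ^ Suc m"
    by (simp only: subset_expand)
  finally show ?thesis .
qed


lemma upd_sumF: fixes m :: nat shows "(\<Sum>j<m. F ((y(m:=b)) j)) = (\<Sum>j<m. F (y j))"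
  by (intro sum.cong) auto

lemma lin_upd: fixes m :: nat and w :: real and y :: "nat \<Rightarrow> real" shows "(\<Sum>i<Suc m. w * (y(m:=b)) i) = w * ((\<Sum>j<m. y j) + b)"
proof -
  have "(\<Sum>i<Suc m. w * (y(m:=b)) i) = (\<Sum>i<m. w * (y(m:=b)) i) + w * b" by simp
  also have "(\<Sum>i<m. w * (y(m:=b)) i) = (\<Sum>i<m. w * y i)" by (rule upd_sumF)
  moreover have "w * (\<Sum>j<m. y j) = (\<Sum>j<m. w * y j)" by (rule sum_distrib_left)
  ultimately show ?thesis by (simp add: algebra_simps)
qed

lemma cube_f:
  "(\<Sum>x\<in>hcube (Suc m). complex_of_real (rho (\<Sum>i<Suc m. w * x i)) * (complex_of_real (x m) * (\<Prod>j<m. 1 + \<i> * complex_of_real (x j))))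
   = B m (\<lambda>s. complex_of_real (rho (w * (s + 1)) - rho (w * (s - 1))))"
proof -
  have "(\<Sum>x\<in>hcube (Suc m). complex_of_real (rho (\<Sum>i<Suc m. w * x i)) * (complex_of_real (x m) * (\<Prod>j<m. 1 + \<i> * complex_of_real (x j))))
    = (\<Sum>y\<in>hcube m. complex_of_real (rho (w * ((\<Sum>j<m. y j) + 1)) - rho (w * ((\<Sum>j<m. y j) - 1))) * (\<Prod>j<m. 1 + \<i> * complex_of_real (y j)))"
    unfolding hcube_Suc_sum lin_upd upd_prod by (simp add: algebra_simps)
  also have "\<dots> = B m (\<lambda>s. complex_of_real (rho (w * (s + 1)) - rho (w * (s - 1))))"
    by (rule cube_B)
  finally show ?thesis .
qed

lemma final_ineq:
  fixes w eps C R a d X Y :: real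
  assumes w: "w \<ge> 4/5" and eps: "0 \<le> eps" "eps * d^2 \<le> 1" and d: "d \<ge> 5"
    and a: "0 < a" "a \<le> d" "2 * a \<le> 3 * sqrt d"
    and X: "X > 0" and Y: "Y > 0"
    and C: "C * a \<ge> Y" and R: "R \<ge> 4 * X * C"
  shows "(2 * w * R - 8 * X * Y * eps) / (8 * Y) \<ge> w * (2 * X) / (4 * sqrt d)"
proof -
  have sd: "sqrt d > 0" using d by simp
  have "w / (2 * sqrt d) \<le> w / a - w / (4 * a)"
  proof -
    have "w / (2 * sqrt d) \<le> w / (2 * (2/3 * a))"
      using a w sd by (intro divide_left_mono mult_left_mono) auto
    also have "\<dots> = w / a - w / (4 * a)" using a by (simp add: field_simps)
    finally show ?thesis .
  qed
  moreover have "eps \<le> w / (4 * a)"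
  proof -
    have "eps \<le> 1 / d^2" using eps d by (simp add: field_simps)
    also have "\<dots> \<le> (4/5) / (4 * d)" using d by (simp add: field_simps power2_eq_square)
    also have "\<dots> \<le> w / (4 * a)" by (rule frac_le) (use w a d in auto)
    finally show ?thesis .
  qed
  ultimately have key: "w / (2 * sqrt d) \<le> w / a - eps" by linarith
  have CY: "C \<ge> Y / a" using C a by (simp add: field_simps)
  have "2 * w * R \<ge> 2 * w * (4 * X * (Y / a))"
    using R CY w X by (intro mult_left_mono order_trans[OF _ R] mult_left_mono) auto
  have "w * (2 * X) / (4 * sqrt d) = X * (w / (2 * sqrt d))" using sd by (simp add: field_simps)
  also have "\<dots> \<le> X * (w / a - eps)" using key X by (intro mult_left_mono) auto
  also have "X * (w / a - eps) = (2 * w * (4 * X * (Y / a)) - 8 * X * Y * eps) / (8 * Y)"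
    using Y a by (simp add: field_simps)
  also have "\<dots> \<le> (2 * w * R - 8 * X * Y * eps) / (8 * Y)"
    using Y \<open>2 * w * R \<ge> _\<close> by (intro divide_right_mono) auto
  finally show ?thesis by simp
qed


theorem lemma26:
  fixes d :: nat and \<beta> :: real
  assumes "d \<ge> 5" and "d mod 4 = 1" and "\<beta> \<ge> real d * ln (real d)"
  shows "\<exists>(J :: nat \<Rightarrow> nat \<Rightarrow> real) (h :: nat \<Rightarrow> real) (g :: nat \<Rightarrow> real).
           rbm_width d 1 J h g = \<beta> \<and>
           mrf_width d (rbm_marginal d 1 J h g)
             \<ge> \<beta> * 2 ^ ((d - 1) div 2) / (4 * real d powr (3/2))"
proof -
  define n where "n = (d - 1) div 2"
  have dn: "d = Suc (2 * n)" using assms(1,2) unfolding n_def by presburger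
  obtain k where nk: "n = Suc k" using assms(1) dn by (cases n) auto
  have k1: "k \<ge> 1" using assms(1) dn nk by simp
  define m where "m = 2 * n"
  have dm: "d = Suc m" using dn m_def by simp
  have dpos: "real d > 0" using assms(1) by simp
  define w where "w = \<beta> / real d"
  have wln: "w \<ge> ln (real d)" unfolding w_def using assms(3) dpos by (simp add: field_simps)
  have ln45: "ln (real d) \<ge> 4/5"
  proof -
    have "ln (1 / real d) \<le> 1 / real d - 1" using dpos by (intro ln_le_minus_one) auto
    then have "ln (real d) \<ge> 1 - 1 / real d" using dpos by (simp add: ln_div)
    moreover have "1 / real d \<le> 1/5" using assms(1) by (simp add: field_simps)
    ultimately show ?thesis by linarith
  qed
  have w45: "w \<ge> 4/5" using wln ln45 by linarith
  have wpos: "w > 0" using w45 by linarith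
  have beta: "\<beta> = real d * w" unfolding w_def using dpos by simp
  define J :: "nat \<Rightarrow> nat \<Rightarrow> real" where "J = (\<lambda>i j. w)"
  define h :: "nat \<Rightarrow> real" where "h = (\<lambda>_. 0)"
  define g :: "nat \<Rightarrow> real" where "g = (\<lambda>_. 0)"
  have width: "rbm_width d 1 J h g = \<beta>"
  proof -
    have ne: "{..<d} \<noteq> {}" using assms(1) by (simp add: lessThan_empty_iff)
    have "(\<lambda>i. (\<Sum>j<1. \<bar>J i j\<bar>) + \<bar>h i\<bar>) ` {..<d} = {w}"
      using ne wpos unfolding J_def h_def by auto
    moreover have "(\<lambda>j. (\<Sum>i<d. \<bar>J i j\<bar>) + \<bar>g j\<bar>) ` {..<1} = {real d * w}"
      using wpos unfolding J_def g_def by auto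
    ultimately have "rbm_width d 1 J h g = max w (real d * w)" unfolding rbm_width_def by simp
    also have "\<dots> = real d * w" using wpos assms(1) by (simp add: max_def)
    finally show ?thesis using beta by simp
  qed
  define f where "f = rbm_marginal d 1 J h g"
  have f_eq: "f x = rho (\<Sum>i<Suc m. w * x i)" for x
    unfolding f_def rbm_marginal_def J_def h_def g_def dm by simp
  define TT where "TT = {T. T \<subseteq> {0..<Suc m} \<and> m \<in> T}"
  have g1: "mrf_width d f \<ge> (\<Sum>T\<in>TT. \<bar>fourier_coeff d f T\<bar>)"
    unfolding mrf_width_def TT_def dm by (rule Max_ge) auto
  have g2: "(\<Sum>T\<in>TT. \<bar>fourier_coeff d f T\<bar>) \<ge> cmod (\<Sum>T\<in>TT. \<i> ^ (card T - 1) * complex_of_real (fourier_coeff d f T))"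
  proof -
    have "cmod (\<Sum>T\<in>TT. \<i> ^ (card T - 1) * complex_of_real (fourier_coeff d f T)) \<le> (\<Sum>T\<in>TT. cmod (\<i> ^ (card T - 1) * complex_of_real (fourier_coeff d f T)))"
      by (rule norm_sum)
    also have "\<dots> = (\<Sum>T\<in>TT. \<bar>fourier_coeff d f T\<bar>)" by (simp add: norm_mult norm_power)
    finally show ?thesis .
  qed
  define D where "D = (\<lambda>s. complex_of_real (rho (w * (s + 1)) - rho (w * (s - 1))))"
  define E where "E = (\<lambda>s. D s - complex_of_real (2 * w) * sg s)"
  have g3: "(\<Sum>T\<in>TT. \<i> ^ (card T - 1) * complex_of_real (fourier_coeff d f T)) = B m D / 2 ^ Suc m"
    unfolding TT_def dm fourier_sum f_eq cube_f D_def ..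
  have BD: "B m D = complex_of_real (2 * w) * (\<i> * complex_of_real (R n)) + B m E"
  proof -
    have "B m D = B m (\<lambda>s. complex_of_real (2 * w) * sg s + E s)" unfolding E_def by simp
    also have "\<dots> = complex_of_real (2 * w) * B m sg + B m E" by (simp add: B_add B_scale)
    finally show ?thesis unfolding m_def V_R .
  qed
  have BE: "cmod (B m E) \<le> 4 ^ n * 2 ^ n * exp (- 2 * w)"
    unfolding m_def
  proof (rule B_bound)
    fix p assume "p \<le> 2 * n"
    define kk where "kk = int p - int n"
    have s: "2 * real p - real (2 * n) = 2 * real_of_int kk" unfolding kk_def by simp
    have "E (2 * real p - real (2 * n)) = complex_of_real (rho (w * (2 * of_int kk + 1)) - rho (w * (2 * of_int kk - 1)) - 2 * w * sgn (real_of_int kk))"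
      unfolding s E_def D_def sg_def by (simp add: sgn_mult)
    then have "cmod (E (2 * real p - real (2 * n))) = \<bar>rho (w * (2 * of_int kk + 1)) - rho (w * (2 * of_int kk - 1)) - 2 * w * sgn (real_of_int kk)\<bar>"
      by (simp only: norm_of_real)
    then show "cmod (E (2 * real p - real (2 * n))) \<le> exp (- 2 * w)"
      using D_err[of w kk] wpos by simp
  qed
  have g4: "cmod (B m D) \<ge> 2 * w * R n - 4 ^ n * 2 ^ n * exp (- 2 * w)"
  proof -
    have "cmod (complex_of_real (2 * w) * (\<i> * complex_of_real (R n))) = 2 * w * R n"
      using wpos R_nonneg[of n] by (simp add: norm_mult)
    moreover have "cmod (complex_of_real (2 * w) * (\<i> * complex_of_real (R n))) \<le> cmod (B m D) + cmod (B m E)"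
      unfolding BD by (metis add_diff_cancel_right' norm_triangle_ineq4)
    ultimately show ?thesis using BE by linarith
  qed
  have gam: "mrf_width d f \<ge> (2 * w * R n - 4 ^ n * 2 ^ n * exp (- 2 * w)) / 2 ^ Suc m"
  proof -
    have "(2 * w * R n - 4 ^ n * 2 ^ n * exp (- 2 * w)) / 2 ^ Suc m \<le> cmod (B m D) / 2 ^ Suc m"
      using g4 by (intro divide_right_mono) auto
    also have "\<dots> = cmod (B m D / 2 ^ Suc m)" by (simp add: norm_divide norm_power)
    finally show ?thesis using g1 g2 g3 by simp
  qed
  define X :: real where "X = 2 ^ k"
  define Y :: real where "Y = 4 ^ k"
  define a where "a = sqrt (4 * real k + 1)"
  define C where "C = real (2 * k choose k)"
  have apos: "a > 0" unfolding a_def by simp  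
  have dk: "real d = 2 * real k + 3" using dn nk by simp  
  have eps: "exp (- 2 * w) * (real d) ^ 2 \<le> 1"
  proof -
    have "exp (- 2 * w) \<le> exp (- 2 * ln (real d))" using wln by simp  
    also have "exp (- 2 * ln (real d)) = 1 / (real d) ^ 2"
    proof -
      have "exp (2 * ln (real d)) = exp (ln (real d)) * exp (ln (real d))" by (simp flip: exp_add)  
      also have "\<dots> = (real d) ^ 2" using dpos by (simp add: power2_eq_square)  
      finally show ?thesis by (simp add: exp_minus field_simps)  
    qed
    finally show ?thesis using dpos by (simp add: field_simps)  
  qed
  have ad: "a \<le> real d"
  proof -
    have "a ^ 2 \<le> (real d) ^ 2" unfolding a_def dk by (simp add: power2_eq_square algebra_simps)  
    then show ?thesis by (rule power2_le_imp_le) (use dpos in auto)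
  qed
  have a3: "2 * a \<le> 3 * sqrt (real d)"
  proof -
    have "(2 * a) ^ 2 \<le> (3 * sqrt (real d)) ^ 2" unfolding a_def power_mult_distrib using dpos dk by simp  
    then show ?thesis by (rule power2_le_imp_le) (use dpos in auto)
  qed
  have CY: "C * a \<ge> Y"
  proof -
    have "(C * a) ^ 2 = C ^ 2 * (4 * real k + 1)" unfolding a_def power_mult_distrib by simp  
    also have "\<dots> \<ge> 16 ^ k" unfolding C_def by (rule central_binom)  
    also have "(16::real) ^ k = Y ^ 2" unfolding Y_def
      by (simp add: power2_eq_square power_mult_distrib[symmetric])
    finally have "Y ^ 2 \<le> (C * a) ^ 2" .
    then show ?thesis by (rule power2_le_imp_le) (use apos in \<open>auto simp: C_def\<close>)
  qed
  have RC: "R n \<ge> 4 * X * C" unfolding nk X_def C_def using R_Suc_ge[of k] by (simp add: power_add)  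
  have fin: "(2 * w * R n - 8 * X * Y * exp (- 2 * w)) / (8 * Y) \<ge> w * (2 * X) / (4 * sqrt (real d))"
    by (rule final_ineq[OF w45 _ eps _ apos ad a3 _ _ CY RC]) (use assms(1) in \<open>auto simp: X_def Y_def\<close>)  
  have e1: "(2 * w * R n - 4 ^ n * 2 ^ n * exp (- 2 * w)) / 2 ^ Suc m = (2 * w * R n - 8 * X * Y * exp (- 2 * w)) / (8 * Y)"
  proof -
    have p1: "(4::real) ^ n * 2 ^ n = 8 * X * Y" unfolding nk X_def Y_def by simp
    have p3: "(2::real) ^ Suc m = 8 * Y"
    proof -
      have "(2::real) ^ Suc m = 2 * (2 ^ 2) ^ n" unfolding m_def by (simp add: power_mult)
      also have "\<dots> = 8 * Y" unfolding nk Y_def by simp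
      finally show ?thesis .
    qed
    show ?thesis unfolding p1 p3 ..
  qed
  have e2: "\<beta> * 2 ^ ((d - 1) div 2) / (4 * real d powr (3/2)) = w * (2 * X) / (4 * sqrt (real d))"
  proof -
    have "real d powr (3/2) = real d powr (1 + 1/2)" by simp
    also have "\<dots> = real d powr 1 * real d powr (1/2)" by (rule powr_add)
    also have "\<dots> = real d * sqrt (real d)" using dpos by (simp add: powr_half_sqrt)
    finally have "real d powr (3/2) = real d * sqrt (real d)" .
    moreover have "(d - 1) div 2 = Suc k" using n_def nk by simp  
    ultimately show ?thesis unfolding beta X_def using dpos by (simp add: field_simps)
  qed
  have "mrf_width d (rbm_marginal d 1 J h g) \<ge> \<beta> * 2 ^ ((d - 1) div 2) / (4 * real d powr (3/2))"
    using gam fin unfolding e1 e2 f_def by linarith  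
  then show ?thesis using width by blast  
qed

end
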